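(* Let $G$ be a connected graph on at least $3$ vertices and let $G'$ be obtained from $G$ by splitting a vertex $v$. Then $rx_3(G')\le rx_3(G)+1$.
   Context: To split a vertex $v$ of $G$ means: replace $v$ by two new adjacent vertices $v_1,v_2$, and replace each edge $vu$ of $G$ by exactly one of the edges $v_1u$ or $v_2u$ (the other endpoint $u$ unchanged); all other edges are kept. An edge coloring may give adjacent edges the same color; a tree is rainbow if its edges have pairwise distinct colors. For a connected graph on at least $3$ vertices, $rx_3$ is the minimum number of colors in an edge coloring such that every set of $3$ vertices lies in some rainbow tree. *)

theory Defs
  imports Main
begin

definition simple_graph :: "'a set \<Rightarrow> 'a set set \<Rightarrow> bool" where
  "simple_graph V E \<longleftrightarrow> finite V \<and> (\<forall>e\<in>E. e \<subseteq> V \<and> card e = 2)"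

definition adj :: "'a set set \<Rightarrow> 'a \<Rightarrow> 'a \<Rightarrow> bool" where
  "adj E x y \<longleftrightarrow> {x, y} \<in> E"

definition graph_connected :: "'a set \<Rightarrow> 'a set set \<Rightarrow> bool" where
  "graph_connected V E \<longleftrightarrow> (\<forall>x\<in>V. \<forall>y\<in>V. (adj E)\<^sup>*\<^sup>* x y)"

definition has_cycle :: "'a set set \<Rightarrow> bool" where
  "has_cycle E \<longleftrightarrow> (\<exists>xs. length xs \<ge> 3 \<and> distinct xs \<and>
      (\<forall>i<length xs. {xs ! i, xs ! ((i + 1) mod length xs)} \<in> E))"

definition is_tree :: "'a set \<Rightarrow> 'a set set \<Rightarrow> bool" where
  "is_tree W F \<longleftrightarrow> W \<noteq> {} \<and> (\<forall>e\<in>F. e \<subseteq> W \<and> card e = 2) \<and>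
      graph_connected W F \<and> \<not> has_cycle F"

definition rainbow_3_connecting :: "'a set \<Rightarrow> 'a set set \<Rightarrow> ('a set \<Rightarrow> nat) \<Rightarrow> bool" where
  "rainbow_3_connecting V E c \<longleftrightarrow>
     (\<forall>S. S \<subseteq> V \<and> card S = 3 \<longrightarrow>
        (\<exists>W F. W \<subseteq> V \<and> F \<subseteq> E \<and> is_tree W F \<and> S \<subseteq> W \<and> inj_on c F))"

definition rx3 :: "'a set \<Rightarrow> 'a set set \<Rightarrow> nat" where
  "rx3 V E = (LEAST k. \<exists>c. (\<forall>e\<in>E. c e < k) \<and> rainbow_3_connecting V E c)"

(* (V', E') is obtained from (V, E) by splitting vertex v into new adjacent vertices
   v1, v2; each edge vu is replaced by exactly one of v1u, v2u (choice function f). *)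
definition is_split :: "'a set \<Rightarrow> 'a set set \<Rightarrow> 'a \<Rightarrow> 'a set \<Rightarrow> 'a set set \<Rightarrow> bool" where
  "is_split V E v V' E' \<longleftrightarrow> v \<in> V \<and>
     (\<exists>v1 v2 f. v1 \<noteq> v2 \<and> v1 \<notin> V - {v} \<and> v2 \<notin> V - {v} \<and>
        (\<forall>u. f u = v1 \<or> f u = v2) \<and>
        V' = (V - {v}) \<union> {v1, v2} \<and>
        E' = {e \<in> E. v \<notin> e} \<union> {{f u, u} | u. {v, u} \<in> E} \<union> {{v1, v2}})"

end

theory Submission
  imports Defs
begin

lemma adj_sym: "adj G x y \<Longrightarrow> adj G y x"
  unfolding adj_def by (simp add: insert_commute)

lemma rtc_sym: "(adj G)\<^sup>*\<^sup>* x y \<Longrightarrow> (adj G)\<^sup>*\<^sup>* y x"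
  by (induction rule: rtranclp_induct) (auto intro: converse_rtranclp_into_rtranclp adj_sym)

lemma cycle_path:
  assumes len: "length xs \<ge> 3" and dis: "distinct xs"
    and cyc: "\<forall>i<length xs. {xs ! i, xs ! ((i + 1) mod length xs)} \<in> G"
  shows "(adj (G - {{xs!0, xs!1}}))\<^sup>*\<^sup>* (xs!1) (xs!0)"
proof -
  let ?n = "length xs"
  let ?H = "G - {{xs!0, xs!1}}"
  have step: "1 \<le> j \<and> j < ?n \<longrightarrow> (adj ?H)\<^sup>*\<^sup>* (xs!1) (xs!j)" for j
  proof (induction j)
    case 0 then show ?case by simp
  next
    case (Suc j)
    show ?case
    proof (cases "j = 0")
      case True then show ?thesis by simp
    next
      case False
      show ?thesis
      proof
        assume a: "1 \<le> Suc j \<and> Suc j < ?n"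
        then have ih: "(adj ?H)\<^sup>*\<^sup>* (xs!1) (xs!j)" using Suc.IH False by simp
        have jn: "j < ?n" "(j+1) mod ?n = Suc j" using a by auto
        have inG: "{xs!j, xs!Suc j} \<in> G" using cyc jn by fastforce
        have ne: "{xs!j, xs!Suc j} \<noteq> {xs!0, xs!1}"
        proof
          assume eq: "{xs!j, xs!Suc j} = {xs!0, xs!1}"
          have "xs!Suc j \<in> {xs!0, xs!1}" using eq by blast
          moreover have "Suc j < ?n" "0 < ?n" "1 < ?n" using len a by linarith+
          ultimately have "Suc j = 0 \<or> Suc j = 1"
            using nth_eq_iff_index_eq[OF dis] by blast
          then show False using False by simp
        qed
        have "adj ?H (xs!j) (xs!Suc j)" using inG ne unfolding adj_def by simp
        then show "(adj ?H)\<^sup>*\<^sup>* (xs!1) (xs!Suc j)" using ih by simp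
      qed
    qed
  qed
  have p: "(adj ?H)\<^sup>*\<^sup>* (xs!1) (xs!(?n - 1))" using step[of "?n - 1"] len by (simp add: Suc_le_eq)
  have "?n - 1 + 1 = ?n" using len by linarith
  then have m: "(?n - 1 + 1) mod ?n = 0" by simp
  have inG: "{xs!(?n - 1), xs!0} \<in> G" using cyc[rule_format, of "?n - 1"] m len by simp
  have ne: "{xs!(?n - 1), xs!0} \<noteq> {xs!0, xs!1}"
  proof
    assume eq: "{xs!(?n - 1), xs!0} = {xs!0, xs!1}"
    have "xs!(?n - 1) \<in> {xs!0, xs!1}" using eq by blast
    moreover have "?n - 1 < ?n" "0 < ?n" "1 < ?n" using len by linarith+
    ultimately have "?n - 1 = 0 \<or> ?n - 1 = 1"
      using nth_eq_iff_index_eq[OF dis] by blast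
    then show False using len by simp
  qed
  have "adj ?H (xs!(?n - 1)) (xs!0)" using inG ne unfolding adj_def by simp
  then show ?thesis using p by simp
qed

lemma remove_cycle_edge:
  assumes "graph_connected W G" "has_cycle G"
  shows "\<exists>e\<in>G. graph_connected W (G - {e})"
proof -
  obtain xs where len: "length xs \<ge> 3" and dis: "distinct xs"
    and cyc: "\<forall>i<length xs. {xs ! i, xs ! ((i + 1) mod length xs)} \<in> G"
    using assms(2) unfolding has_cycle_def by blast
  let ?e = "{xs!0, xs!1}"
  let ?H = "G - {?e}"
  have "0 < length xs" using len by linarith
  then have eG: "?e \<in> G" using cyc[rule_format, of 0] len by simp
  have p: "(adj ?H)\<^sup>*\<^sup>* (xs!1) (xs!0)" by (rule cycle_path[OF len dis cyc])
  have p2: "(adj ?H)\<^sup>*\<^sup>* (xs!0) (xs!1)" using rtc_sym[OF p] .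
  have sub: "(adj ?H)\<^sup>*\<^sup>* x y" if "adj G x y" for x y
  proof (cases "{x, y} = ?e")
    case True
    then have "(x = xs!0 \<and> y = xs!1) \<or> (x = xs!1 \<and> y = xs!0)" by (simp add: doubleton_eq_iff)
    then show ?thesis using p p2 by auto
  next
    case False
    then have "adj ?H x y" using that unfolding adj_def by simp
    then show ?thesis by simp
  qed
  have "(adj ?H)\<^sup>*\<^sup>* x y" if "(adj G)\<^sup>*\<^sup>* x y" for x y
    using that by (induction rule: rtranclp_induct) (simp, meson rtranclp_trans sub)
  then have "graph_connected W ?H" using assms(1) unfolding graph_connected_def by blast
  then show ?thesis using eG by blast
qed

lemma spanning_tree:
  assumes "finite W" "W \<noteq> {}" "\<forall>e\<in>F. e \<subseteq> W \<and> card e = 2" "graph_connected W F"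
  shows "\<exists>T\<subseteq>F. is_tree W T"
proof -
  have finF: "finite F" using assms(1,3) by (meson Pow_iff finite_Pow_iff rev_finite_subset subsetI)
  obtain T where T: "T \<subseteq> F \<and> graph_connected W T"
    and min: "\<forall>T'. T' \<subseteq> F \<and> graph_connected W T' \<longrightarrow> card T \<le> card T'"
    using ex_has_least_nat[of "\<lambda>T. T \<subseteq> F \<and> graph_connected W T" F card] assms(4) by auto
  have "\<not> has_cycle T"
  proof
    assume "has_cycle T"
    then obtain e where e: "e \<in> T" "graph_connected W (T - {e})" using remove_cycle_edge[of W T] T by blast
    have "finite T" using finF T finite_subset by blast
    then have "card (T - {e}) < card T" using e(1) by (meson card_Diff1_less)
    moreover have "T - {e} \<subseteq> F" using T by blast
    then have "card T \<le> card (T - {e})" using min e(2) by blast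
    ultimately show False by simp
  qed
  then have "is_tree W T" using T assms unfolding is_tree_def by blast
  then show ?thesis using T by blast
qed

lemma extend3:
  assumes "finite V" "A \<subseteq> V" "card A \<le> 3" "3 \<le> card V"
  shows "\<exists>T. A \<subseteq> T \<and> T \<subseteq> V \<and> card T = 3"
proof -
  have fA: "finite A" using assms finite_subset by blast
  have "card (V - A) = card V - card A" using assms fA by (simp add: card_Diff_subset)
  then have "3 - card A \<le> card (V - A)" using assms by simp
  then obtain B where B: "B \<subseteq> V - A" "card B = 3 - card A" "finite B"
    by (meson obtain_subset_with_card_n)
  have "A \<inter> B = {}" using B by blast
  then have "card (A \<union> B) = card A + card B" using card_Un_disjoint[OF fA B(3)] by simp
  then have "card (A \<union> B) = 3" using B assms by simp
  moreover have "A \<union> B \<subseteq> V" using B assms by blast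
  ultimately show ?thesis by blast
qed


theorem theorem9:
  fixes V V' :: "'a set" and E E' :: "'a set set" and v :: 'a
  assumes "simple_graph V E"
    and "graph_connected V E"
    and "card V \<ge> 3"
    and "is_split V E v V' E'"
  shows "rx3 V' E' \<le> rx3 V E + 1"
proof -
  have fV: "finite V" and Eok: "\<forall>e\<in>E. e \<subseteq> V \<and> card e = 2"
    using assms(1) unfolding simple_graph_def by auto
  have vV: "v \<in> V" using assms(4) unfolding is_split_def by blast
  obtain v1 v2 f where v12: "v1 \<noteq> v2" "v1 \<notin> V - {v}" "v2 \<notin> V - {v}"
    and fv: "\<forall>u. f u = v1 \<or> f u = v2"
    and V'def: "V' = (V - {v}) \<union> {v1, v2}"
    and E'def: "E' = {e \<in> E. v \<notin> e} \<union> {{f u, u} | u. {v, u} \<in> E} \<union> {{v1, v2}}"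
    using assms(4) unfolding is_split_def by blast
  have Vne: "V \<noteq> {}" using assms(3) by auto
  have "E \<subseteq> Pow V" using Eok by blast
  then have finE: "finite E" by (rule finite_subset) (simp add: fV)
  from finite_imp_inj_to_nat_seg[OF finE] obtain g :: "'a set \<Rightarrow> nat" and n :: nat where gn0: "g ` E = {i. i < n} \<and> inj_on g E"
    by blast
  have gn: "\<forall>e\<in>E. g e < n" "inj_on g E" using gn0 by blast+
  have ex: "\<exists>c. (\<forall>e\<in>E. c e < n) \<and> rainbow_3_connecting V E c"
  proof (intro exI[of _ g] conjI)
    show "\<forall>e\<in>E. g e < n" using gn(1) .
    show "rainbow_3_connecting V E g"
      unfolding rainbow_3_connecting_def
    proof (intro allI impI)
      fix S assume S: "S \<subseteq> V \<and> card S = 3"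
      obtain T where T: "T \<subseteq> E" "is_tree V T" using spanning_tree[OF fV Vne Eok assms(2)] by blast
      have "inj_on g T" using gn(2) T(1) by (rule inj_on_subset)
      then show "\<exists>W F. W \<subseteq> V \<and> F \<subseteq> E \<and> is_tree W F \<and> S \<subseteq> W \<and> inj_on g F"
        using S T by blast
    qed
  qed
  then have ex': "\<exists>k c. (\<forall>e\<in>E. c e < k) \<and> rainbow_3_connecting V E c" by blast
  define k where "k = rx3 V E"
  obtain c where c: "\<forall>e\<in>E. c e < k" "rainbow_3_connecting V E c"
    using LeastI_ex[OF ex'] unfolding k_def rx3_def by (elim exE conjE) blast
  define q where "q x = (if x = v1 \<or> x = v2 then v else x)" for x
  define c' where "c' e = (if e = {v1, v2} then k else c (q ` e))" for e
  have edgeE: "u \<in> V \<and> u \<noteq> v \<and> u \<noteq> v1 \<and> u \<noteq> v2" if "{v, u} \<in> E" for u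
  proof -
    have h: "{v,u} \<subseteq> V" "card {v,u} = 2" using Eok that by auto
    have "u \<noteq> v"
    proof
      assume "u = v" then have "card {v,u} = 1" by simp
      then show False using h by simp
    qed
    then show ?thesis using v12 h by auto
  qed
  have qid: "q x = x" if "x \<in> V" "x \<noteq> v" for x using that v12 unfolding q_def by auto
  have qimg1: "q ` e = e" if "e \<subseteq> V" "v \<notin> e" for e
  proof -
    have "q ` e = (\<lambda>x. x) ` e" by (rule image_cong) (use qid that in auto)
    then show ?thesis by simp
  qed
  have qimg2: "q ` {f u, u} = {v, u}" if "{v, u} \<in> E" for u
    using edgeE[OF that] fv[rule_format, of u] unfolding q_def by auto
  have E'cases: "(e \<in> E \<and> v \<notin> e) \<or> (\<exists>u. e = {f u, u} \<and> {v, u} \<in> E) \<or> e = {v1, v2}"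
    if "e \<in> E'" for e
    using that unfolding E'def by blast
  have cbound: "\<forall>e\<in>E'. c' e < k + 1"
  proof
    fix e assume "e \<in> E'"
    then consider (a) "e \<in> E" "v \<notin> e" | (b) u where "e = {f u, u}" "{v, u} \<in> E"
      | (d) "e = {v1, v2}" using E'cases by blast
    then show "c' e < k + 1"
    proof cases
      case a then have "q ` e = e" using qimg1 Eok by blast
      then show ?thesis using a c(1) unfolding c'_def by auto
    next
      case b then have "q ` e = {v, u}" using qimg2 by blast
      then show ?thesis using b c(1) unfolding c'_def by auto
    next
      case d then show ?thesis by (simp add: c'_def)
    qed
  qed
  have rb: "rainbow_3_connecting V' E' c'"
    unfolding rainbow_3_connecting_def
  proof (intro allI impI)
    fix S assume S: "S \<subseteq> V' \<and> card S = 3"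
    have qS: "q ` S \<subseteq> V" using S vV unfolding V'def q_def by auto
    have fS: "finite S"
    proof (rule ccontr)
      assume "\<not> finite S" then have "card S = 0" by simp
      then show False using S by simp
    qed
    have c3: "card (q ` S) \<le> 3" using card_image_le[OF fS, of q] S by simp
    obtain T where T: "q ` S \<subseteq> T" "T \<subseteq> V" "card T = 3"
      using extend3[OF fV qS c3 assms(3)] by blast
    obtain W F where WF: "W \<subseteq> V" "F \<subseteq> E" "is_tree W F" "T \<subseteq> W" "inj_on c F"
      using c(2)[unfolded rainbow_3_connecting_def, rule_format, of T] T(2,3) by blast
    have Sx: "x \<in> {v1,v2} \<or> (q x = x \<and> x \<in> V - {v})" if "x \<in> S" for x
      using that S unfolding V'def q_def by auto
    have Ftree: "\<forall>e\<in>F. e \<subseteq> W \<and> card e = 2" "graph_connected W F" "W \<noteq> {}"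
      using WF(3) unfolding is_tree_def by auto
    show "\<exists>W F. W \<subseteq> V' \<and> F \<subseteq> E' \<and> is_tree W F \<and> S \<subseteq> W \<and> inj_on c' F"
    proof (cases "v \<in> W")
      case False
      have SW: "S \<subseteq> W"
      proof
        fix x assume x: "x \<in> S"
        have "q x \<in> W" using x T WF by blast
        then show "x \<in> W" using Sx[OF x] False unfolding q_def by auto
      qed
      have WV': "W \<subseteq> V'" using WF(1) False unfolding V'def by blast
      have FE': "F \<subseteq> E'" using WF(2) Ftree(1) False unfolding E'def by blast
      have ceq: "c' e = c e" if "e \<in> F" for e
      proof -
        have eW: "e \<subseteq> W" using Ftree(1) that by blast
        then have "e \<subseteq> V" "v \<notin> e" using WF(1) False by auto
        then have "q ` e = e" by (rule qimg1)
        moreover have "e \<noteq> {v1, v2}" using eW WF(1) False v12 by blast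
        ultimately show ?thesis unfolding c'_def by simp
      qed
      have "inj_on c' F = inj_on c F" by (rule inj_on_cong) (simp add: ceq)
      then have "inj_on c' F" using WF(5) by simp
      then show ?thesis using SW WV' FE' WF(3) by blast
    next
      case True
      note vW = True
      define W' where "W' = (W - {v}) \<union> {v1, v2}"
      define F1 where "F1 = {e \<in> F. v \<notin> e} \<union> {{f u, u} | u. {v, u} \<in> F} \<union> {{v1, v2}}"
      have F1cases: "(e \<in> F \<and> v \<notin> e) \<or> (\<exists>u. e = {f u, u} \<and> {v, u} \<in> F) \<or> e = {v1, v2}"
        if "e \<in> F1" for e
        using that unfolding F1_def by blast
      have W'V': "W' \<subseteq> V'" using WF(1) unfolding W'_def V'def by blast
      have F1E': "F1 \<subseteq> E'" using WF(2) unfolding F1_def E'def by blast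
      have SW': "S \<subseteq> W'"
      proof
        fix x assume x: "x \<in> S"
        have "q x \<in> W" using x T WF by blast
        then show "x \<in> W'" using Sx[OF x] unfolding W'_def by auto
      qed
      have finW': "finite W'" using WF(1) fV finite_subset unfolding W'_def by blast
      have W'ne: "W' \<noteq> {}" unfolding W'_def by blast
      have F1ok: "\<forall>e\<in>F1. e \<subseteq> W' \<and> card e = 2"
      proof
        fix e assume "e \<in> F1"
        then consider (a) "e \<in> F" "v \<notin> e" | (b) u where "e = {f u, u}" "{v, u} \<in> F"
          | (d) "e = {v1, v2}" using F1cases by blast
        then show "e \<subseteq> W' \<and> card e = 2"
        proof cases
          case a then show ?thesis using Ftree(1) unfolding W'_def by blast
        next
          case b
          have uW: "u \<in> W" using b Ftree(1) by blast
          have u: "u \<in> V" "u \<noteq> v" "u \<noteq> v1" "u \<noteq> v2" using edgeE b WF(2) by blast+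
          have "f u = v1 \<or> f u = v2" using fv by blast
          then show ?thesis using b uW u unfolding W'_def by auto
        next
          case d then show ?thesis using v12 unfolding W'_def by auto
        qed
      qed
      let ?R = "(adj F1)\<^sup>*\<^sup>*"
      have e12: "adj F1 v1 v2" "adj F1 v2 v1" unfolding adj_def F1_def by (auto simp: insert_commute)
      have R12: "?R a b" if "a \<in> {v1, v2}" "b \<in> {v1, v2}" for a b
        using that e12 by auto
      define lift where "lift w = (if w = v then {v1, v2} else {w})" for w
      have liftR: "\<forall>a\<in>lift x. \<forall>b\<in>lift y. ?R a b" if "(adj F)\<^sup>*\<^sup>* x y" for x y
        using that
      proof (induction rule: rtranclp_induct)
        case base then show ?case using R12 unfolding lift_def by auto
      next
        case (step y z)
        have yz: "{y, z} \<in> F" using step(2) unfolding adj_def .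
        have ynz: "y \<noteq> z"
        proof
          assume "y = z" then have "card {y,z} = 1" by simp
          then show False using Ftree(1) yz by fastforce
        qed
        define b' where "b' = (if y = v then v1 else y)"
        have b'l: "b' \<in> lift y" unfolding b'_def lift_def by auto
        have key: "?R b' b" if "b \<in> lift z" for b
        proof (cases "y = v")
          case True
          then have zv: "z \<noteq> v" "b = z" using ynz that unfolding lift_def by auto
          have "{f z, z} \<in> F1" using yz True unfolding F1_def by blast
          then have a1: "adj F1 (f z) z" unfolding adj_def .
          have "?R v1 (f z)" using R12 fv by blast
          then show ?thesis using a1 True zv unfolding b'_def by (simp add: rtranclp.rtrancl_into_rtrancl)
        next
          case False
          note yv = False
          show ?thesis
          proof (cases "z = v")
            case True
            have "{v, y} \<in> F" using yz True by (simp add: insert_commute)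
            then have "{f y, y} \<in> F1" unfolding F1_def by blast
            then have a1: "adj F1 y (f y)" unfolding adj_def by (simp add: insert_commute)
            have "b \<in> {v1,v2}" using that True unfolding lift_def by simp
            then have "?R (f y) b" using R12 fv by blast
            then show ?thesis using a1 yv unfolding b'_def by (simp add: converse_rtranclp_into_rtranclp)
          next
            case False
            have "{y, z} \<in> F1" using yz False yv unfolding F1_def by blast
            then show ?thesis using that False yv unfolding b'_def lift_def adj_def by auto
          qed
        qed
        show ?case using step(3) b'l key by (meson rtranclp_trans)
      qed
      have rep: "\<exists>w\<in>W. x \<in> lift w" if "x \<in> W'" for x
      proof (cases "x \<in> {v1, v2}")
        case True then show ?thesis using vW unfolding lift_def by auto
      next
        case False then have "x \<in> W" "x \<noteq> v" using that unfolding W'_def by auto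
        then show ?thesis unfolding lift_def by auto
      qed
      have conn: "graph_connected W' F1"
        unfolding graph_connected_def
      proof (intro ballI)
        fix a b assume a: "a \<in> W'" and b: "b \<in> W'"
        obtain wa where wa: "wa \<in> W" "a \<in> lift wa" using rep a by blast
        obtain wb where wb: "wb \<in> W" "b \<in> lift wb" using rep b by blast
        have "(adj F)\<^sup>*\<^sup>* wa wb" using Ftree(2) wa wb unfolding graph_connected_def by blast
        then show "?R a b" using liftR wa wb by blast
      qed
      have qa: "q ` e = e" if "e \<in> F" "v \<notin> e" for e
      proof -
        have "e \<subseteq> V" using that Ftree(1) WF(1) by blast
        then show ?thesis using qimg1 that by blast
      qed
      have qb: "q ` {f u, u} = {v, u}" if "{v, u} \<in> F" for u
        using qimg2 that WF(2) by blast
      have cF1: "c' e = c (q ` e) \<and> q ` e \<in> F" if h: "e \<in> F1" "e \<noteq> {v1, v2}" for e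
      proof -
        consider (a) "e \<in> F" "v \<notin> e" | (b) u where "e = {f u, u}" "{v, u} \<in> F"
          using F1cases[OF h(1)] h(2) by blast
        then show ?thesis
        proof cases
          case a then show ?thesis using qa[OF a] h unfolding c'_def by simp
        next
          case b then show ?thesis using qb[OF b(2)] h unfolding c'_def by simp
        qed
      qed
      have qinj: "e1 = e2" if h: "e1 \<in> F1" "e2 \<in> F1" "e1 \<noteq> {v1,v2}" "e2 \<noteq> {v1,v2}"
          "q ` e1 = q ` e2" for e1 e2
      proof -
        consider (a) "e1 \<in> F" "v \<notin> e1" | (b) u1 where "e1 = {f u1, u1}" "{v, u1} \<in> F"
          using F1cases h(1,3) by blast
        then show ?thesis
        proof cases
          case a
          have q1: "q ` e1 = e1" using qa[OF a] .
          consider (a2) "e2 \<in> F" "v \<notin> e2" | (b2) u2 where "e2 = {f u2, u2}" "{v, u2} \<in> F"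
            using F1cases h(2,4) by blast
          then show ?thesis
          proof cases
            case a2 then show ?thesis using qa[OF a2] q1 h(5) by simp
          next
            case b2 then show ?thesis using qb[OF b2(2)] q1 h(5) a by auto
          qed
        next
          case b
          have q1: "q ` e1 = {v, u1}" using qb[OF b(2)] b(1) by simp
          have u1: "u1 \<noteq> v" using edgeE b(2) WF(2) by blast
          consider (a2) "e2 \<in> F" "v \<notin> e2" | (b2) u2 where "e2 = {f u2, u2}" "{v, u2} \<in> F"
            using F1cases h(2,4) by blast
          then show ?thesis
          proof cases
            case a2 then show ?thesis using qa[OF a2] q1 h(5) by auto
          next
            case b2
            have u2: "u2 \<noteq> v" using edgeE b2(2) WF(2) by blast
            have "{v, u1} = {v, u2}" using qb[OF b2(2)] b2(1) q1 h(5) by simp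
            then have "u1 = u2" using u1 u2 by (auto simp: doubleton_eq_iff)
            then show ?thesis using b b2 by simp
          qed
        qed
      qed
      have lt: "c' e < k" if "e \<in> F1" "e \<noteq> {v1, v2}" for e
        using cF1[OF that] WF(2) c(1) by auto
      have ck: "c' e = k \<longleftrightarrow> e = {v1, v2}" if "e \<in> F1" for e
        using lt[of e] that by (cases "e = {v1, v2}") (auto simp: c'_def)
      have injF1: "inj_on c' F1"
      proof (rule inj_onI)
        fix e1 e2 assume e: "e1 \<in> F1" "e2 \<in> F1" "c' e1 = c' e2"
        have iff: "e1 = {v1, v2} \<longleftrightarrow> e2 = {v1, v2}" using ck[OF e(1)] ck[OF e(2)] e(3) by simp
        show "e1 = e2"
        proof (cases "e1 = {v1, v2}")
          case True then show ?thesis using iff by simp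
        next
          case False
          then have n2: "e2 \<noteq> {v1, v2}" using iff by simp
          have "c (q ` e1) = c (q ` e2)" using cF1[OF e(1) False] cF1[OF e(2) n2] e(3) by simp
          then have "q ` e1 = q ` e2" using WF(5) cF1[OF e(1) False] cF1[OF e(2) n2]
            by (meson inj_onD)
          then show ?thesis using qinj e(1,2) False n2 by blast
        qed
      qed
      obtain T1 where T1: "T1 \<subseteq> F1" "is_tree W' T1"
        using spanning_tree[OF finW' W'ne F1ok conn] by blast
      have "inj_on c' T1" using injF1 T1(1) inj_on_subset by blast
      then show ?thesis using T1 F1E' W'V' SW' by blast
    qed
  qed
  have "rx3 V' E' \<le> k + 1" unfolding rx3_def
    by (rule Least_le) (use cbound rb in blast)
  then show ?thesis unfolding k_def .
qed

end
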